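(* Let $f:\mathbb{Z}^n\to\mathbb{R}\cup\{+\infty\}$ be a function satisfying condition (SSQM$^\natural$) with $\arg\min f\neq\emptyset$, and let $x\in\mathrm{dom}\,f$ with $x\notin\arg\min f$. Let $(i,j)$ be a pair of distinct elements of $N\cup\{0\}$ minimizing the value $f(x-\chi_i+\chi_j)$. Then there exists a minimizer $x^*$ of $f$ satisfying: - if $i,j\in N$: $x^*(i)\le x(i)-1$ and $x^*(j)\ge x(j)+1$; - if $i\in N$ and $j=0$: $x^*(i)\le x(i)-1$; - if $i=0$ and $j\in N$: $x^*(j)\ge x(j)+1$.
   Context: $N=\{1,\dots,n\}$. For $i\in N$, $\chi_i\in\{0,1\}^n$ is the characteristic vector of $i$, and $\chi_0=0$. $\mathrm{dom}\,f=\{x\in\mathbb{Z}^n\mid f(x)<+\infty\}$. For $x,y\in\mathbb{Z}^n$, $\mathrm{supp}^+(x-y)=\{i\in N\mid x(i)>y(i)\}$ and $\mathrm{supp}^-(x-y)=\{j\in N\mid x(j)<y(j)\}$. Condition (SSQM$^\natural$): for all $x,y\in\mathrm{dom}\,f$ and all $i\in\mathrm{supp}^+(x-y)$ there exists $j\in\mathrm{supp}^-(x-y)\cup\{0\}$ such that at least one of the following holds: (a) $f(x-\chi_i+\chi_j)<f(x)$; (b) $f(y+\chi_i-\chi_j)<f(y)$; (c) $f(x-\chi_i+\chi_j)=f(x)$ and $f(y+\chi_i-\chi_j)=f(y)$. *)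

theory Defs
  imports "HOL-Library.Extended_Real"
begin

text \<open>Integer vectors in Z^n are represented as functions nat => int, indexed by
  N = {1..n}, and vanishing outside N. Index 0 is reserved for chi_0 = 0.\<close>

definition zvecs :: "nat \<Rightarrow> (nat \<Rightarrow> int) set" where
  "zvecs n = {x. \<forall>k. k \<notin> {1..n} \<longrightarrow> x k = 0}"

definition chi :: "nat \<Rightarrow> nat \<Rightarrow> int" where
  "chi i = (\<lambda>k. if i \<noteq> 0 \<and> k = i then 1 else 0)"

definition fdom :: "nat \<Rightarrow> ((nat \<Rightarrow> int) \<Rightarrow> ereal) \<Rightarrow> (nat \<Rightarrow> int) set" where
  "fdom n f = {x \<in> zvecs n. f x < \<infinity>}"

definition argmin_f :: "nat \<Rightarrow> ((nat \<Rightarrow> int) \<Rightarrow> ereal) \<Rightarrow> (nat \<Rightarrow> int) set" where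
  "argmin_f n f = {x \<in> zvecs n. \<forall>y \<in> zvecs n. f x \<le> f y}"

definition SSQM_nat :: "nat \<Rightarrow> ((nat \<Rightarrow> int) \<Rightarrow> ereal) \<Rightarrow> bool" where
  "SSQM_nat n f \<longleftrightarrow>
     (\<forall>x \<in> fdom n f. \<forall>y \<in> fdom n f. \<forall>i \<in> {1..n}. y i < x i \<longrightarrow>
        (\<exists>j \<in> {j \<in> {1..n}. x j < y j} \<union> {0}.
           f (\<lambda>k. x k - chi i k + chi j k) < f x \<or>
           f (\<lambda>k. y k + chi i k - chi j k) < f y \<or>
           (f (\<lambda>k. x k - chi i k + chi j k) = f x \<and> f (\<lambda>k. y k + chi i k - chi j k) = f y)))"

end

theory Submission
  imports Defs
begin

definition Dst :: "nat \<Rightarrow> (nat \<Rightarrow> int) \<Rightarrow> (nat \<Rightarrow> int) \<Rightarrow> int" where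
  "Dst n w t = (\<Sum>m\<in>{1..n}. \<bar>w m - t m\<bar>)"

lemma Dst_nonneg: "Dst n w t \<ge> 0"
  unfolding Dst_def by (rule sum_nonneg) auto

lemma zvecs_move:
  assumes "w \<in> zvecs n" "a \<in> {0..n}" "b \<in> {0..n}"
  shows "(\<lambda>m. w m - chi b m + chi a m) \<in> zvecs n" "(\<lambda>m. w m + chi a m - chi b m) \<in> zvecs n"
  using assms by (auto simp: zvecs_def chi_def)

lemma dist_dec:
  assumes "a \<in> {0..n}" "b \<in> {0..n}" "a = 0 \<or> w a < t a" "b = 0 \<or> t b < w b" "a \<noteq> 0 \<or> b \<noteq> 0"
  shows "Dst n (\<lambda>m. w m - chi b m + chi a m) t < Dst n w t"
    "Dst n (\<lambda>m. w m + chi a m - chi b m) t < Dst n w t"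
proof -
  have ab: "a = 0 \<or> b = 0 \<or> a \<noteq> b" using assms by auto
  have lt: "Dst n (\<lambda>m. w m - chi b m + chi a m) t < Dst n w t"
    unfolding Dst_def
  proof (rule sum_strict_mono_ex1)
    show "finite {1..n}" by simp
    show "\<forall>m\<in>{1..n}. \<bar>w m - chi b m + chi a m - t m\<bar> \<le> \<bar>w m - t m\<bar>"
      using assms ab by (auto simp: chi_def)
    show "\<exists>m\<in>{1..n}. \<bar>w m - chi b m + chi a m - t m\<bar> < \<bar>w m - t m\<bar>"
    proof (cases "a = 0")
      case True
      then have "b \<noteq> 0" using assms by auto
      then show ?thesis using assms True by (intro bexI[of _ b]) (auto simp: chi_def)
    next
      case False
      then show ?thesis using assms ab by (intro bexI[of _ a]) (auto simp: chi_def)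
    qed
  qed
  then show "Dst n (\<lambda>m. w m - chi b m + chi a m) t < Dst n w t" .
  have "(\<lambda>m. w m + chi a m - chi b m) = (\<lambda>m. w m - chi b m + chi a m)" by auto
  then show "Dst n (\<lambda>m. w m + chi a m - chi b m) t < Dst n w t" using lt by simp
qed

lemma nearest:
  assumes "argmin_f n f \<noteq> {}"
  obtains xs where "xs \<in> argmin_f n f" "\<forall>z\<in>argmin_f n f. Dst n xs t \<le> Dst n z t"
proof -
  obtain z0 where z0: "z0 \<in> argmin_f n f" using assms by auto
  obtain xs where "xs \<in> argmin_f n f" "\<forall>z. z \<in> argmin_f n f \<longrightarrow> nat (Dst n xs t) \<le> nat (Dst n z t)"
    using ex_has_least_nat[of "\<lambda>z. z \<in> argmin_f n f" z0 "\<lambda>z. nat (Dst n z t)"] z0 by blast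
  moreover have "\<forall>z\<in>argmin_f n f. Dst n xs t \<le> Dst n z t"
    using calculation(2) Dst_nonneg by (metis nat_le_eq_zle)
  ultimately show ?thesis using that by blast
qed

theorem theorem2p9:
  fixes n :: nat and f :: "(nat \<Rightarrow> int) \<Rightarrow> ereal"
    and x :: "nat \<Rightarrow> int" and i j :: nat
  assumes real_or_inf: "\<forall>z \<in> zvecs n. f z \<noteq> -\<infinity>"
    and ssqm: "SSQM_nat n f"
    and ne: "argmin_f n f \<noteq> {}"
    and xdom: "x \<in> fdom n f"
    and xnot: "x \<notin> argmin_f n f"
    and ij: "i \<in> {0..n}" "j \<in> {0..n}" "i \<noteq> j"
    and ijmin: "\<forall>i' \<in> {0..n}. \<forall>j' \<in> {0..n}. i' \<noteq> j' \<longrightarrow>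
                  f (\<lambda>k. x k - chi i k + chi j k) \<le> f (\<lambda>k. x k - chi i' k + chi j' k)"
  shows "\<exists>xs \<in> argmin_f n f.
           (i \<noteq> 0 \<and> j \<noteq> 0 \<longrightarrow> xs i \<le> x i - 1 \<and> xs j \<ge> x j + 1) \<and>
           (i \<noteq> 0 \<and> j = 0 \<longrightarrow> xs i \<le> x i - 1) \<and>
           (i = 0 \<and> j \<noteq> 0 \<longrightarrow> xs j \<ge> x j + 1)"
proof -
  have SS: "\<And>u v k. u \<in> fdom n f \<Longrightarrow> v \<in> fdom n f \<Longrightarrow> k \<in> {1..n} \<Longrightarrow> v k < u k \<Longrightarrow>
        (\<exists>j' \<in> {j \<in> {1..n}. u j < v j} \<union> {0}.
           f (\<lambda>k'. u k' - chi k k' + chi j' k') < f u \<or>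
           f (\<lambda>k'. v k' + chi k k' - chi j' k') < f v \<or>
           (f (\<lambda>k'. u k' - chi k k' + chi j' k') = f u \<and> f (\<lambda>k'. v k' + chi k k' - chi j' k') = f v))"
    using ssqm unfolding SSQM_nat_def by blast
  have xz: "x \<in> zvecs n" and xfin: "f x < \<infinity>" using xdom by (auto simp: fdom_def)
  have am: "\<And>z. z \<in> argmin_f n f \<Longrightarrow> z \<in> zvecs n \<and> (\<forall>y\<in>zvecs n. f z \<le> f y)"
    by (auto simp: argmin_f_def)
  have amI: "\<And>z w. w \<in> argmin_f n f \<Longrightarrow> z \<in> zvecs n \<Longrightarrow> f z = f w \<Longrightarrow> z \<in> argmin_f n f"
    by (auto simp: argmin_f_def)
  have amdom: "\<And>z. z \<in> argmin_f n f \<Longrightarrow> z \<in> fdom n f"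
  proof -
    fix z assume z: "z \<in> argmin_f n f"
    then have "f z \<le> f x" using am xz by blast
    then show "z \<in> fdom n f" using am[OF z] xfin by (auto simp: fdom_def)
  qed
  define \<alpha> where "\<alpha> = f (\<lambda>k. x k - chi i k + chi j k)"
  have nb: "\<And>a b. a \<in> {0..n} \<Longrightarrow> b \<in> {0..n} \<Longrightarrow> a \<noteq> b \<Longrightarrow> \<alpha> \<le> f (\<lambda>k. x k - chi a k + chi b k)"
    using ijmin unfolding \<alpha>_def by blast
  have alt: "\<alpha> < f x"
  proof -
    obtain xs where xs: "xs \<in> argmin_f n f" and near: "\<forall>z\<in>argmin_f n f. Dst n xs x \<le> Dst n z x"
      using nearest[OF ne] by blast
    have xsz: "xs \<in> zvecs n" and xsmin: "\<forall>y\<in>zvecs n. f xs \<le> f y" using am[OF xs] by auto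
    have xsd: "xs \<in> fdom n f" using amdom[OF xs] .
    have "xs \<noteq> x" using xs xnot by auto
    then obtain k where k: "xs k \<noteq> x k" by auto
    have kN: "k \<in> {1..n}" proof (rule ccontr)
      assume "k \<notin> {1..n}"
      then have "xs k = 0" "x k = 0" using xsz xz unfolding zvecs_def by blast+
      then show False using k by simp
    qed
    show ?thesis
    proof (cases "xs k < x k")
      case True
      obtain j' where j': "j' \<in> {j \<in> {1..n}. x j < xs j} \<union> {0}" and
        c: "f (\<lambda>k'. x k' - chi k k' + chi j' k') < f x \<or>
           f (\<lambda>k'. xs k' + chi k k' - chi j' k') < f xs \<or>
           (f (\<lambda>k'. x k' - chi k k' + chi j' k') = f x \<and> f (\<lambda>k'. xs k' + chi k k' - chi j' k') = f xs)"
        using SS[OF xdom xsd kN True] by blast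
      have j'n: "j' \<in> {0..n}" and kj: "k \<noteq> j'" using j' kN True by auto
      have pz: "(\<lambda>k'. xs k' + chi k k' - chi j' k') \<in> zvecs n"
        using zvecs_move(2)[OF xsz _ j'n, of k] kN by auto
      have dd: "Dst n (\<lambda>k'. xs k' + chi k k' - chi j' k') x < Dst n xs x"
        using dist_dec(2)[of k n j' xs x] kN j' True by auto
      show ?thesis
      proof -
        { assume "f (\<lambda>k'. x k' - chi k k' + chi j' k') < f x"
          then have ?thesis using nb[of k j'] kN j'n kj by force }
        moreover
        { assume "f (\<lambda>k'. xs k' + chi k k' - chi j' k') < f xs"
          then have False using xsmin pz by (meson leD) }
        moreover
        { assume "f (\<lambda>k'. xs k' + chi k k' - chi j' k') = f xs"
          then have "(\<lambda>k'. xs k' + chi k k' - chi j' k') \<in> argmin_f n f" using amI[OF xs pz] by blast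
          then have False using near dd by force }
        ultimately show ?thesis using c by blast
      qed
    next
      case False
      then have lt: "x k < xs k" using k by auto
      obtain j' where j': "j' \<in> {j \<in> {1..n}. xs j < x j} \<union> {0}" and
        c: "f (\<lambda>k'. xs k' - chi k k' + chi j' k') < f xs \<or>
           f (\<lambda>k'. x k' + chi k k' - chi j' k') < f x \<or>
           (f (\<lambda>k'. xs k' - chi k k' + chi j' k') = f xs \<and> f (\<lambda>k'. x k' + chi k k' - chi j' k') = f x)"
        using SS[OF xsd xdom kN lt] by blast
      have j'n: "j' \<in> {0..n}" and kj: "k \<noteq> j'" using j' kN lt by auto
      have pz: "(\<lambda>k'. xs k' - chi k k' + chi j' k') \<in> zvecs n"
        using zvecs_move(1)[OF xsz j'n, of k] kN by auto
      have dd: "Dst n (\<lambda>k'. xs k' - chi k k' + chi j' k') x < Dst n xs x"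
        using dist_dec(1)[of j' n k xs x] kN j' lt by auto
      have eq: "(\<lambda>k'. x k' + chi k k' - chi j' k') = (\<lambda>k'. x k' - chi j' k' + chi k k')" by auto
      show ?thesis
      proof -
        { assume "f (\<lambda>k'. x k' + chi k k' - chi j' k') < f x"
          then have ?thesis using nb[of j' k] kN j'n kj eq by force }
        moreover
        { assume "f (\<lambda>k'. xs k' - chi k k' + chi j' k') < f xs"
          then have False using xsmin pz by (meson leD) }
        moreover
        { assume "f (\<lambda>k'. xs k' - chi k k' + chi j' k') = f xs"
          then have "(\<lambda>k'. xs k' - chi k k' + chi j' k') \<in> argmin_f n f" using amI[OF xs pz] by blast
          then have False using near dd by force }
        ultimately show ?thesis using c by blast
      qed
    qed
  qed
  define y where "y = (\<lambda>k. x k - chi i k + chi j k)"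
  have yz: "y \<in> zvecs n" unfolding y_def using zvecs_move(1)[OF xz ij(2) ij(1)] .
  have fy: "f y = \<alpha>" unfolding y_def \<alpha>_def ..
  have ydom: "y \<in> fdom n f" using yz fy alt xfin by (auto simp: fdom_def)
  obtain xs where xs: "xs \<in> argmin_f n f" and near: "\<forall>z\<in>argmin_f n f. Dst n xs y \<le> Dst n z y"
    using nearest[OF ne] by blast
  have xsz: "xs \<in> zvecs n" and xsmin: "\<forall>y\<in>zvecs n. f xs \<le> f y" using am[OF xs] by auto
  have xsd: "xs \<in> fdom n f" using amdom[OF xs] .
  have P1: "xs i \<le> x i - 1" if i0: "i \<noteq> 0"
  proof (rule ccontr)
    assume "\<not> xs i \<le> x i - 1"
    then have lt: "y i < xs i" using i0 ij unfolding y_def chi_def by auto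
    have iN: "i \<in> {1..n}" using i0 ij by auto
    obtain j' where j': "j' \<in> {j \<in> {1..n}. xs j < y j} \<union> {0}" and
      c: "f (\<lambda>k'. xs k' - chi i k' + chi j' k') < f xs \<or>
         f (\<lambda>k'. y k' + chi i k' - chi j' k') < f y \<or>
         (f (\<lambda>k'. xs k' - chi i k' + chi j' k') = f xs \<and> f (\<lambda>k'. y k' + chi i k' - chi j' k') = f y)"
      using SS[OF xsd ydom iN lt] by blast
    have j'n: "j' \<in> {0..n}" using j' by auto
    have pz: "(\<lambda>k'. xs k' - chi i k' + chi j' k') \<in> zvecs n"
      using zvecs_move(1)[OF xsz j'n ij(1)] .
    have dd: "Dst n (\<lambda>k'. xs k' - chi i k' + chi j' k') y < Dst n xs y"
      using dist_dec(1)[of j' n i xs y] iN j' lt by auto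
    have eq: "(\<lambda>k'. y k' + chi i k' - chi j' k') = (\<lambda>k'. x k' - chi j' k' + chi j k')"
      unfolding y_def by auto
    { assume "f (\<lambda>k'. y k' + chi i k' - chi j' k') < f y"
      then have lt2: "f (\<lambda>k'. x k' - chi j' k' + chi j k') < \<alpha>" using eq fy by simp
      have False
      proof (cases "j' = j")
        case True
        have "(\<lambda>k'. x k' - chi j' k' + chi j k') = x" using True by auto
        then show False using lt2 alt by simp
      next
        case False
        then show False using nb[of j' j] j'n ij lt2 by force
      qed }
    moreover
    { assume "f (\<lambda>k'. xs k' - chi i k' + chi j' k') < f xs"
      then have False using xsmin pz by (meson leD) }
    moreover
    { assume "f (\<lambda>k'. xs k' - chi i k' + chi j' k') = f xs"
      then have "(\<lambda>k'. xs k' - chi i k' + chi j' k') \<in> argmin_f n f" using amI[OF xs pz] by blast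
      then have False using near dd by force }
    ultimately show False using c by blast
  qed
  have P2: "xs j \<ge> x j + 1" if j0: "j \<noteq> 0"
  proof (rule ccontr)
    assume "\<not> xs j \<ge> x j + 1"
    then have lt: "xs j < y j" using j0 ij unfolding y_def chi_def by auto
    have jN: "j \<in> {1..n}" using j0 ij by auto
    obtain j' where j': "j' \<in> {j \<in> {1..n}. y j < xs j} \<union> {0}" and
      c: "f (\<lambda>k'. y k' - chi j k' + chi j' k') < f y \<or>
         f (\<lambda>k'. xs k' + chi j k' - chi j' k') < f xs \<or>
         (f (\<lambda>k'. y k' - chi j k' + chi j' k') = f y \<and> f (\<lambda>k'. xs k' + chi j k' - chi j' k') = f xs)"
      using SS[OF ydom xsd jN lt] by blast
    have j'n: "j' \<in> {0..n}" using j' by auto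
    have pz: "(\<lambda>k'. xs k' + chi j k' - chi j' k') \<in> zvecs n"
      using zvecs_move(2)[OF xsz ij(2) j'n] .
    have dd: "Dst n (\<lambda>k'. xs k' + chi j k' - chi j' k') y < Dst n xs y"
      using dist_dec(2)[of j n j' xs y] jN j' lt by auto
    have eq: "(\<lambda>k'. y k' - chi j k' + chi j' k') = (\<lambda>k'. x k' - chi i k' + chi j' k')"
      unfolding y_def by auto
    { assume "f (\<lambda>k'. y k' - chi j k' + chi j' k') < f y"
      then have lt2: "f (\<lambda>k'. x k' - chi i k' + chi j' k') < \<alpha>" using eq fy by simp
      have False
      proof (cases "j' = i")
        case True
        have "(\<lambda>k'. x k' - chi i k' + chi j' k') = x" using True by auto
        then show False using lt2 alt by simp
      next
        case False
        then show False using nb[of i j'] j'n ij lt2 by force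
      qed }
    moreover
    { assume "f (\<lambda>k'. xs k' + chi j k' - chi j' k') < f xs"
      then have False using xsmin pz by (meson leD) }
    moreover
    { assume "f (\<lambda>k'. xs k' + chi j k' - chi j' k') = f xs"
      then have "(\<lambda>k'. xs k' + chi j k' - chi j' k') \<in> argmin_f n f" using amI[OF xs pz] by blast
      then have False using near dd by force }
    ultimately show False using c by blast
  qed
  show ?thesis using xs P1 P2 by blast
qed

end
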